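(* Let $\kappa$ be an admissible kernel induced by $\mathbf a:\mathbb R^D\to\mathcal H$, and let $\mathcal S=\{\theta^\star_\ell\}_{\ell=1}^{m}\subset\mathbb R^D$ (pairwise distinct) be admissible with respect to $\kappa$. Then (i) the atoms $\mathbf a(\theta^\star_1),\dots,\mathbf a(\theta^\star_m)$ are linearly independent; (ii) with $\mathbf G\in\mathbb R^{m\times m}$, $\mathbf G[\ell,\ell']=\kappa(\theta^\star_\ell,\theta^\star_{\ell'})$, and $\mathbf g_\theta\in\mathbb R^m$, $\mathbf g_\theta[\ell]=\kappa(\theta,\theta^\star_\ell)$, one has $\|\mathbf G^{-1}\mathbf g_\theta\|_1<1$ for every $\theta\in\mathbb R^D\setminus\mathcal S$.
   Context: Kernel: $\kappa(\theta,\theta')=\langle\mathbf a(\theta),\mathbf a(\theta')\rangle$ on a real Hilbert space $\mathcal H$. The kernel is admissible if: (i) $\kappa(\theta,\theta)=1$ for all $\theta$; $\lim_{\theta'\to\theta}\kappa(\theta,\theta')=1$ for all $\theta$; for every $\varepsilon>0$ and $\theta$ there is a compact $K$ with $\sup_{\theta'\notin K}\kappa(\theta',\theta)<\varepsilon$; (ii) $0\le\kappa(\theta,\theta')<1$ whenever $\theta\ne\theta'$. A support $\{\theta^\star_\ell\}_{\ell=1}^k$ is admissible with respect to $\kappa$ if for every nonempty $T\subseteq\{1,\dots,k\}$ and every positive reals $\{c_\ell\}_{\ell\in T}$ with $\sum_{\ell\in T}c_\ell<1$, setting $\psi(\theta)=\sum_{\ell\in T}c_\ell\kappa(\theta,\theta^\star_\ell)$: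 (i) the set of global maximizers of $\psi$ over $\mathbb R^D$ is contained in $\{\theta^\star_\ell\}_{\ell\in T}$; (ii) if $\ell\in\{1,\dots,k\}\setminus T$ satisfies $\psi(\theta)-\kappa(\theta,\theta^\star_\ell)\le 0$ for all $\theta\in\{\theta^\star_{\ell'}\}_{\ell'\in T}$, then $\psi(\theta)-\kappa(\theta,\theta^\star_\ell)\le0$ for all $\theta\in\mathbb R^D$. *)

theory Defs
  imports "HOL-Analysis.Analysis"
begin

definition kern :: "('a \<Rightarrow> 'h::real_inner) \<Rightarrow> 'a \<Rightarrow> 'a \<Rightarrow> real" where
  "kern a \<theta> \<theta>' = inner (a \<theta>) (a \<theta>')"

text \<open>Admissible kernel. The condition sup over the complement of K of kern(theta',theta) being
  less than eps is written as: some c < eps bounds kern(theta',theta) for all theta' outside K.\<close>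
definition admissible_kernel :: "('a::topological_space \<Rightarrow> 'h::real_inner) \<Rightarrow> bool" where
  "admissible_kernel a \<longleftrightarrow>
     (\<forall>\<theta>. kern a \<theta> \<theta> = 1) \<and>
     (\<forall>\<theta>. ((\<lambda>\<theta>'. kern a \<theta> \<theta>') \<longlongrightarrow> 1) (at \<theta>)) \<and>
     (\<forall>\<epsilon>>0. \<forall>\<theta>. \<exists>K. compact K \<and> (\<exists>c<\<epsilon>. \<forall>\<theta>'. \<theta>' \<notin> K \<longrightarrow> kern a \<theta>' \<theta> \<le> c)) \<and>
     (\<forall>\<theta> \<theta>'. \<theta> \<noteq> \<theta>' \<longrightarrow> 0 \<le> kern a \<theta> \<theta>' \<and> kern a \<theta> \<theta>' < 1)"

text \<open>Admissible support, indexed by a finite type 'm (the index set {1..k}).\<close>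
definition admissible_support :: "('a \<Rightarrow> 'h::real_inner) \<Rightarrow> ('m::finite \<Rightarrow> 'a) \<Rightarrow> bool" where
  "admissible_support a \<theta>s \<longleftrightarrow>
     (\<forall>T c. T \<noteq> {} \<longrightarrow> (\<forall>l\<in>T. 0 < c l) \<longrightarrow> sum c T < 1 \<longrightarrow>
        (\<forall>\<theta>. (\<forall>\<theta>'. (\<Sum>l\<in>T. c l * kern a \<theta>' (\<theta>s l)) \<le> (\<Sum>l\<in>T. c l * kern a \<theta> (\<theta>s l)))
              \<longrightarrow> \<theta> \<in> \<theta>s ` T) \<and>
        (\<forall>l. l \<notin> T \<longrightarrow>
           (\<forall>\<theta>\<in>\<theta>s ` T. (\<Sum>l'\<in>T. c l' * kern a \<theta> (\<theta>s l')) - kern a \<theta> (\<theta>s l) \<le> 0) \<longrightarrow>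
           (\<forall>\<theta>. (\<Sum>l'\<in>T. c l' * kern a \<theta> (\<theta>s l')) - kern a \<theta> (\<theta>s l) \<le> 0)))"

definition gram :: "('a \<Rightarrow> 'h::real_inner) \<Rightarrow> ('m::finite \<Rightarrow> 'a) \<Rightarrow> real^'m^'m" where
  "gram a \<theta>s = (\<chi> l l'. kern a (\<theta>s l) (\<theta>s l'))"

definition gvec :: "('a \<Rightarrow> 'h::real_inner) \<Rightarrow> ('m::finite \<Rightarrow> 'a) \<Rightarrow> 'a \<Rightarrow> real^'m" where
  "gvec a \<theta>s \<theta> = (\<chi> l. kern a \<theta> (\<theta>s l))"

end

theory Submission
  imports Defs
begin

definition comb :: "('a \<Rightarrow> 'h::real_inner) \<Rightarrow> ('m \<Rightarrow> 'a) \<Rightarrow> 'm set \<Rightarrow> ('m \<Rightarrow> real) \<Rightarrow> 'h" where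
  "comb a \<theta>s T c = (\<Sum>l\<in>T. c l *\<^sub>R a (\<theta>s l))"

definition ps :: "('a \<Rightarrow> 'h::real_inner) \<Rightarrow> ('m \<Rightarrow> 'a) \<Rightarrow> 'm set \<Rightarrow> 'h \<Rightarrow> ('m \<Rightarrow> real) \<Rightarrow> bool" where
  "ps a \<theta>s T x c \<longleftrightarrow> (\<forall>l. l \<notin> T \<longrightarrow> c l = 0) \<and>
     (\<forall>j\<in>T. inner (x - comb a \<theta>s T c) (a (\<theta>s j)) = 0)"

lemma inner_comb: "inner (comb a \<theta>s T c) y = (\<Sum>l\<in>T. c l * inner (a (\<theta>s l)) y)"
  by (simp add: comb_def inner_sum_left)

lemma inner_comb2: "inner y (comb a \<theta>s T c) = (\<Sum>l\<in>T. c l * inner y (a (\<theta>s l)))"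
  by (simp add: comb_def inner_sum_right)

lemma exist_ps:
  assumes "finite T"
  shows "\<exists>c. ps a \<theta>s T x c"
  using assms
proof (induction T arbitrary: x rule: finite_induct)
  case empty
  then show ?case by (auto simp: ps_def)
next
  case (insert l T)
  obtain c where c: "ps a \<theta>s T x c" using insert by blast
  obtain d where d: "ps a \<theta>s T (a (\<theta>s l)) d" using insert by blast
  define r where "r = a (\<theta>s l) - comb a \<theta>s T d"
  have cl0: "c l = 0" "d l = 0" using c d insert(2) by (auto simp: ps_def)
  have rperp: "inner r (a (\<theta>s j)) = 0" if "j \<in> T" for j
    using d that by (simp add: ps_def r_def)
  have eperp: "inner (x - comb a \<theta>s T c) (a (\<theta>s j)) = 0" if "j \<in> T" for j
    using c that by (simp add: ps_def)
  have combperp_r: "inner (comb a \<theta>s T f) r = 0" for f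
    unfolding inner_comb by (rule sum.neutral) (metis inner_commute mult_zero_right rperp)
  have combperp_e: "inner (comb a \<theta>s T f) (x - comb a \<theta>s T c) = 0" for f
    unfolding inner_comb by (rule sum.neutral) (metis inner_commute mult_zero_right eperp)
  have insert_comb: "comb a \<theta>s (insert l T) f = f l *\<^sub>R a (\<theta>s l) + comb a \<theta>s T f" for f
    using insert by (simp add: comb_def)
  show ?case
  proof (cases "r = 0")
    case True
    have al: "a (\<theta>s l) = comb a \<theta>s T d" using True r_def by simp
    have "ps a \<theta>s (insert l T) x c"
      unfolding ps_def
    proof (intro conjI ballI allI impI)
      fix j assume "j \<notin> insert l T" then show "c j = 0" using c by (auto simp: ps_def)
    next
      fix j assume j: "j \<in> insert l T"
      have cc: "comb a \<theta>s (insert l T) c = comb a \<theta>s T c" using insert_comb cl0 by simp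
      show "inner (x - comb a \<theta>s (insert l T) c) (a (\<theta>s j)) = 0"
      proof (cases "j = l")
        case True
        then show ?thesis using cc al combperp_e[of d] by (simp add: inner_commute)
      next
        case False then show ?thesis using j cc eperp by auto
      qed
    qed
    then show ?thesis by blast
  next
    case False
    define \<alpha> where "\<alpha> = inner x r / inner r r"
    have rr: "inner r r \<noteq> 0" using False by simp
    define c' where "c' = (\<lambda>i. c i + \<alpha> * ((if i = l then 1 else 0) - d i))"
    have cc: "comb a \<theta>s (insert l T) c' = comb a \<theta>s T c + \<alpha> *\<^sub>R r"
    proof -
      have "comb a \<theta>s T c' = comb a \<theta>s T c - \<alpha> *\<^sub>R comb a \<theta>s T d"
      proof -
        have "comb a \<theta>s T c' = comb a \<theta>s T (\<lambda>i. c i - \<alpha> * d i)"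
          using insert(2) unfolding comb_def c'_def by (intro sum.cong) auto
        also have "\<dots> = comb a \<theta>s T c - \<alpha> *\<^sub>R comb a \<theta>s T d"
          by (simp add: comb_def scaleR_diff_left sum_subtractf scaleR_sum_right)
        finally show ?thesis .
      qed
      then show ?thesis using insert_comb[of c'] cl0 by (simp add: c'_def r_def algebra_simps)
    qed
    have "ps a \<theta>s (insert l T) x c'"
      unfolding ps_def
    proof (intro conjI ballI allI impI)
      fix j assume "j \<notin> insert l T" then show "c' j = 0" using c d by (auto simp: ps_def c'_def)
    next
      fix j assume j: "j \<in> insert l T"
      show "inner (x - comb a \<theta>s (insert l T) c') (a (\<theta>s j)) = 0"
      proof (cases "j = l")
        case True
        have al: "a (\<theta>s l) = r + comb a \<theta>s T d" by (simp add: r_def)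
        have 1: "inner (x - comb a \<theta>s T c) r = inner x r"
          using combperp_r[of c] by (simp add: inner_diff_left)
        have 2: "inner r (a (\<theta>s l)) = inner r r"
          using combperp_r[of d] al by (simp add: inner_add_right inner_commute)
        have "inner (x - comb a \<theta>s (insert l T) c') (a (\<theta>s j))
             = inner (x - comb a \<theta>s T c) (a (\<theta>s l)) - \<alpha> * inner r r"
          using cc True 2 by (simp add: inner_diff_left algebra_simps)
        also have "inner (x - comb a \<theta>s T c) (a (\<theta>s l)) = inner x r"
          using al combperp_e[of d] 1 by (simp add: inner_add_right inner_commute)
        finally show ?thesis using rr by (simp add: \<alpha>_def)
      next
        case False
        then have "j \<in> T" using j by auto
        then show ?thesis using cc eperp[of j] rperp[of j] by (simp add: inner_diff_left inner_add_left)
      qed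
    qed
    then show ?thesis by blast
  qed
qed

locale ctx =
  fixes a :: "real^'D \<Rightarrow> 'h::{real_inner,complete_space}"
    and \<theta>s :: "'m::finite \<Rightarrow> real^'D"
  assumes adm: "admissible_kernel a"
    and injs: "inj \<theta>s"
    and sup: "admissible_support a \<theta>s"
begin

definition psi :: "'m set \<Rightarrow> ('m \<Rightarrow> real) \<Rightarrow> real^'D \<Rightarrow> real" where
  "psi T q t = (\<Sum>l\<in>T. q l * kern a t (\<theta>s l))"

lemma kern_diag: "kern a t t = 1"
  using adm by (simp add: admissible_kernel_def)

lemma kern_nonneg: "kern a t t' \<ge> 0"
  using adm kern_diag by (cases "t = t'") (auto simp: admissible_kernel_def)

lemma kern_sym: "kern a t t' = kern a t' t"
  by (simp add: kern_def inner_commute)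

lemma a_cont: "continuous_on UNIV a"
proof (intro continuous_at_imp_continuous_on ballI)
  fix t :: "real^'D"
  have lim: "((\<lambda>t'. kern a t t') \<longlongrightarrow> 1) (at t)" using adm by (simp add: admissible_kernel_def)
  have "((\<lambda>t'. sqrt (2 - 2 * kern a t t')) \<longlongrightarrow> sqrt (2 - 2 * 1)) (at t)"
    by (intro tendsto_intros lim)
  moreover have "norm (a t' - a t) = sqrt (2 - 2 * kern a t t')" for t'
  proof -
    have "inner (a t' - a t) (a t' - a t) = kern a t' t' + kern a t t - 2 * kern a t t'"
      by (simp add: kern_def inner_diff_left inner_diff_right inner_commute)
    then show ?thesis by (simp add: norm_eq_sqrt_inner kern_diag)
  qed
  ultimately have "((\<lambda>t'. norm (a t' - a t)) \<longlongrightarrow> 0) (at t)" by simp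
  then have "(a \<longlongrightarrow> a t) (at t)"
    using tendsto_norm_zero_iff LIM_zero_iff by blast
  then show "isCont a t" by (simp add: isCont_def)
qed

lemma psi_cont: "continuous_on S (psi T q)"
proof -
  have "continuous_on S (\<lambda>t. inner (a t) (a (\<theta>s l)))" for l
    by (intro continuous_on_inner continuous_on_const continuous_on_subset[OF a_cont]) auto
  then show ?thesis unfolding psi_def kern_def
    by (intro continuous_on_sum continuous_on_mult continuous_on_const) auto
qed

lemma psi_max:
  assumes "T \<noteq> {}" "\<forall>l\<in>T. q l > 0"
  shows "\<exists>t0. \<forall>t. psi T q t \<le> psi T q t0"
proof -
  obtain j0 where j0: "j0 \<in> T" using assms by blast
  define \<delta> where "\<delta> = q j0"
  define Q where "Q = sum q T"
  have fin: "finite T" by simp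
  have \<delta>pos: "\<delta> > 0" using assms j0 by (simp add: \<delta>_def)
  have "\<delta> \<le> Q" unfolding Q_def \<delta>_def using assms j0 by (intro member_le_sum) auto
  then have Qpos: "Q > 0" using \<delta>pos by simp
  define \<epsilon> where "\<epsilon> = \<delta> / (2 * Q)"
  have \<epsilon>pos: "\<epsilon> > 0" using \<delta>pos Qpos by (simp add: \<epsilon>_def)
  have "\<forall>l. \<exists>K. compact K \<and> (\<exists>c<\<epsilon>. \<forall>t'. t' \<notin> K \<longrightarrow> kern a t' (\<theta>s l) \<le> c)"
    using adm \<epsilon>pos unfolding admissible_kernel_def by blast
  then have "\<forall>l. \<exists>K. compact K \<and> (\<forall>t'. t' \<notin> K \<longrightarrow> kern a t' (\<theta>s l) \<le> \<epsilon>)"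
    by (meson less_imp_le order_trans)
  then obtain Kf where "\<forall>l. compact (Kf l) \<and> (\<forall>t'. t' \<notin> Kf l \<longrightarrow> kern a t' (\<theta>s l) \<le> \<epsilon>)"
    using choice[of "\<lambda>l K. compact K \<and> (\<forall>t'. t' \<notin> K \<longrightarrow> kern a t' (\<theta>s l) \<le> \<epsilon>)"] by blast
  then have Kf: "\<And>l. compact (Kf l)" "\<And>l t'. t' \<notin> Kf l \<Longrightarrow> kern a t' (\<theta>s l) \<le> \<epsilon>"
    by auto
  define K where "K = insert (\<theta>s j0) (\<Union>l\<in>T. Kf l)"
  have "compact K" unfolding K_def using Kf(1) by (intro compact_insert compact_UN) auto
  then obtain t0 where t0: "t0 \<in> K" "\<forall>y\<in>K. psi T q y \<le> psi T q t0"
    using continuous_attains_sup[of K "psi T q"] psi_cont unfolding K_def by blast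
  have "\<delta> \<le> psi T q (\<theta>s j0)"
  proof -
    have "q j0 * kern a (\<theta>s j0) (\<theta>s j0) \<le> psi T q (\<theta>s j0)"
      unfolding psi_def using assms j0 kern_nonneg by (intro member_le_sum) auto
    then show ?thesis by (simp add: kern_diag \<delta>_def)
  qed
  also have "\<dots> \<le> psi T q t0" using t0 by (simp add: K_def)
  finally have big: "\<delta> \<le> psi T q t0" .
  have small: "psi T q y \<le> \<delta> / 2" if "y \<notin> K" for y
  proof -
    have "psi T q y \<le> (\<Sum>l\<in>T. q l * \<epsilon>)"
      unfolding psi_def
    proof (intro sum_mono mult_left_mono)
      fix l assume "l \<in> T"
      then show "kern a y (\<theta>s l) \<le> \<epsilon>" "0 \<le> q l" using Kf(2) that assms by (auto simp: K_def)
    qed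
    also have "\<dots> = Q * \<epsilon>" by (simp add: Q_def sum_distrib_right)
    also have "\<dots> = \<delta> / 2" using Qpos by (simp add: \<epsilon>_def)
    finally show ?thesis .
  qed
  show ?thesis
  proof (intro exI allI)
    fix y show "psi T q y \<le> psi T q t0"
      using t0 small[of y] big \<delta>pos by (cases "y \<in> K") auto
  qed
qed

lemma psi_maximizer:
  assumes "T \<noteq> {}" "\<forall>l\<in>T. q l > 0" "\<forall>t. psi T q t \<le> psi T q t0"
  shows "t0 \<in> \<theta>s ` T"
proof -
  define Q where "Q = sum q T"
  have Qpos: "Q \<ge> 0" unfolding Q_def using assms by (intro sum_nonneg) auto
  define s where "s = 1 / (Q + 1)"
  have spos: "s > 0" using Qpos by (simp add: s_def)
  have "sum (\<lambda>l. s * q l) T = s * Q" by (simp add: Q_def sum_distrib_left)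
  also have "\<dots> < 1" using Qpos by (simp add: s_def)
  finally have sl: "sum (\<lambda>l. s * q l) T < 1" .
  have pos: "\<forall>l\<in>T. 0 < s * q l" using assms spos by auto
  have eq: "(\<Sum>l\<in>T. s * q l * kern a t (\<theta>s l)) = s * psi T q t" for t
    by (simp add: psi_def sum_distrib_left mult.assoc)
  have "\<forall>t. (\<Sum>l\<in>T. s * q l * kern a t (\<theta>s l)) \<le> (\<Sum>l\<in>T. s * q l * kern a t0 (\<theta>s l))"
    unfolding eq using assms(3) spos by (simp add: mult_left_mono)
  moreover have "\<forall>t. (\<forall>t'. (\<Sum>l\<in>T. s * q l * kern a t' (\<theta>s l)) \<le> (\<Sum>l\<in>T. s * q l * kern a t (\<theta>s l))) \<longrightarrow> t \<in> \<theta>s ` T"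
  proof -
    have "\<forall>T c. T \<noteq> {} \<longrightarrow> (\<forall>l\<in>T. 0 < c l) \<longrightarrow> sum c T < 1 \<longrightarrow>
        (\<forall>t. (\<forall>t'. (\<Sum>l\<in>T. c l * kern a t' (\<theta>s l)) \<le> (\<Sum>l\<in>T. c l * kern a t (\<theta>s l)))
              \<longrightarrow> t \<in> \<theta>s ` T)"
      using sup unfolding admissible_support_def by blast
    from this[rule_format, of T "\<lambda>l. s * q l"] show ?thesis using assms(1) pos sl by blast
  qed
  ultimately show ?thesis by blast
qed

lemma psi_inner: "psi T q t = inner (a t) (comb a \<theta>s T q)"
  by (simp add: psi_def kern_def inner_comb2)

lemma sum_UNIV_comb: "(\<Sum>l\<in>UNIV. c l *\<^sub>R a (\<theta>s l)) = comb a \<theta>s UNIV c"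
  by (simp add: comb_def)

lemma no_pos:
  assumes "(\<Sum>l\<in>UNIV. c l *\<^sub>R a (\<theta>s l)) = 0"
  shows "\<not> (\<exists>l. c l > 0)"
proof
  assume "\<exists>l. c l > 0"
  then obtain j where j: "c j > 0" by blast
  define P where "P = {l. c l > 0}"
  define N where "N = {l. c l < 0}"
  have jP: "j \<in> P" using j by (simp add: P_def)
  have PN: "P \<inter> N = {}" by (auto simp: P_def N_def)
  have "(\<Sum>l\<in>UNIV. c l *\<^sub>R a (\<theta>s l)) = (\<Sum>l\<in>P \<union> N. c l *\<^sub>R a (\<theta>s l))"
    by (intro sum.mono_neutral_right) (auto simp: P_def N_def)
  also have "\<dots> = comb a \<theta>s P c + comb a \<theta>s N c"
    unfolding comb_def by (intro sum.union_disjoint) (auto simp: PN)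
  finally have eq: "comb a \<theta>s P c = comb a \<theta>s N (\<lambda>l. - c l)"
    using assms by (simp add: comb_def sum_negf eq_neg_iff_add_eq_0)
  have psieq: "psi P c t = psi N (\<lambda>l. - c l) t" for t
    by (simp add: psi_inner eq)
  have Ppos: "\<forall>l\<in>P. c l > 0" by (simp add: P_def)
  obtain t0 where t0: "\<forall>t. psi P c t \<le> psi P c t0" using psi_max[of P c] jP Ppos by blast
  have t0P: "t0 \<in> \<theta>s ` P" using psi_maximizer[of P c t0] jP Ppos t0 by blast
  show False
  proof (cases "N = {}")
    case True
    then have "psi P c (\<theta>s j) = 0" using psieq by (simp add: psi_def)
    moreover have "c j * kern a (\<theta>s j) (\<theta>s j) \<le> psi P c (\<theta>s j)"
      unfolding psi_def using Ppos jP kern_nonneg by (intro member_le_sum) auto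
    ultimately show False using j by (simp add: kern_diag)
  next
    case False
    have "\<forall>l\<in>N. - c l > 0" by (simp add: N_def)
    then have "t0 \<in> \<theta>s ` N" using psi_maximizer[of N "\<lambda>l. - c l" t0] False t0 psieq by simp
    then show False using t0P PN injs by (auto dest: injD)
  qed
qed

lemma lin_indep:
  assumes "(\<Sum>l\<in>UNIV. c l *\<^sub>R a (\<theta>s l)) = 0"
  shows "c l = 0"
proof -
  have "(\<Sum>l\<in>UNIV. (- c l) *\<^sub>R a (\<theta>s l)) = 0"
    using assms by (simp add: sum_negf)
  then have "\<not> (\<exists>l. - c l > 0)" using no_pos[of "\<lambda>l. - c l"] by blast
  moreover have "\<not> (\<exists>l. c l > 0)" using no_pos[OF assms] .
  ultimately have "\<not> (0 < - c l)" "\<not> (0 < c l)" by blast+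
  then show ?thesis by linarith
qed

lemma r_nonzero:
  assumes "l \<notin> T"
  shows "a (\<theta>s l) - comb a \<theta>s T d \<noteq> 0"
proof
  assume h: "a (\<theta>s l) - comb a \<theta>s T d = 0"
  define e where "e = (\<lambda>i. (if i = l then 1 else 0) - (if i \<in> T then d i else 0))"
  have 1: "(\<Sum>i\<in>UNIV. (if i = l then 1 else 0) *\<^sub>R a (\<theta>s i)) = a (\<theta>s l)"
    by (simp add: if_distrib[of "\<lambda>x. x *\<^sub>R _"] cong: if_cong)
  have 2: "(\<Sum>i\<in>UNIV. (if i \<in> T then d i else 0) *\<^sub>R a (\<theta>s i)) = comb a \<theta>s T d"
    by (simp add: comb_def if_distrib[of "\<lambda>x. x *\<^sub>R _"] sum.inter_restrict[symmetric] cong: if_cong)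
  have "(\<Sum>i\<in>UNIV. e i *\<^sub>R a (\<theta>s i)) = a (\<theta>s l) - comb a \<theta>s T d"
    unfolding e_def scaleR_diff_left sum_subtractf 1 2 ..
  then have "e l = 0" using lin_indep h by metis
  then show False using assms by (simp add: e_def)
qed

lemma R1:
  assumes "ps a \<theta>s T' x d" "j \<in> T'"
  shows "inner (x - comb a \<theta>s T' d) (a (\<theta>s j)) = 0"
  using assms by (simp add: ps_def)

lemma comb_perp:
  assumes "\<And>j. j \<in> T' \<Longrightarrow> inner r (a (\<theta>s j)) = 0"
  shows "inner (comb a \<theta>s T' q) r = 0"
  unfolding inner_comb by (rule sum.neutral) (metis inner_commute mult_zero_right assms)

lemma comb_remove:
  assumes "l \<in> T"
  shows "comb a \<theta>s T q = q l *\<^sub>R a (\<theta>s l) + comb a \<theta>s (T - {l}) q"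
  unfolding comb_def using assms by (simp add: sum.remove)

lemma R5:
  assumes D: "ps a \<theta>s (T' ) (a (\<theta>s l)) d" "\<forall>i. 0 \<le> d i" "sum d T' < 1" "l \<notin> T'"
  shows "inner (a t) (a (\<theta>s l) - comb a \<theta>s T' d) \<ge> 0"
proof -
  define U where "U = {j\<in>T'. d j > 0}"
  have cU: "comb a \<theta>s T' d = comb a \<theta>s U d"
    unfolding comb_def U_def using D(2) by (intro sum.mono_neutral_right) (auto simp: order_le_less)
  have sU: "sum d T' = sum d U"
    unfolding U_def using D(2) by (intro sum.mono_neutral_right) (auto simp: order_le_less)
  show ?thesis
  proof (cases "U = {}")
    case True
    then show ?thesis using cU kern_nonneg[of t "\<theta>s l"] by (simp add: comb_def kern_def)
  next
    case False
    have lU: "l \<notin> U" using D(4) by (simp add: U_def)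
    have posU: "\<forall>j\<in>U. 0 < d j" by (simp add: U_def)
    have sl: "sum d U < 1" using sU D(3) by simp
    have hyp: "\<forall>\<theta>\<in>\<theta>s ` U. (\<Sum>l'\<in>U. d l' * kern a \<theta> (\<theta>s l')) - kern a \<theta> (\<theta>s l) \<le> 0"
    proof
      fix \<theta> assume "\<theta> \<in> \<theta>s ` U"
      then obtain j where j: "j \<in> U" "\<theta> = \<theta>s j" by blast
      have jT: "j \<in> T'" using j by (simp add: U_def)
      have e1: "(\<Sum>l'\<in>U. d l' * kern a \<theta> (\<theta>s l')) = inner (a (\<theta>s j)) (comb a \<theta>s T' d)"
        using j cU by (simp add: kern_def inner_comb2)
      have e2: "kern a \<theta> (\<theta>s l) = inner (a (\<theta>s j)) (a (\<theta>s l))" using j by (simp add: kern_def)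
      have "(\<Sum>l'\<in>U. d l' * kern a \<theta> (\<theta>s l')) - kern a \<theta> (\<theta>s l)
           = - inner (a (\<theta>s j)) (a (\<theta>s l) - comb a \<theta>s T' d)"
        unfolding e1 e2 by (simp add: inner_diff_right)
      also have "\<dots> = - inner (a (\<theta>s l) - comb a \<theta>s T' d) (a (\<theta>s j))"
        by (simp only: inner_commute)
      also have "\<dots> = 0" using R1[OF D(1) jT] by simp
      finally show "(\<Sum>l'\<in>U. d l' * kern a \<theta> (\<theta>s l')) - kern a \<theta> (\<theta>s l) \<le> 0" by simp
    qed
    have "\<forall>T c. T \<noteq> {} \<longrightarrow> (\<forall>l\<in>T. 0 < c l) \<longrightarrow> sum c T < 1 \<longrightarrow>
        (\<forall>l. l \<notin> T \<longrightarrow>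
           (\<forall>\<theta>\<in>\<theta>s ` T. (\<Sum>l'\<in>T. c l' * kern a \<theta> (\<theta>s l')) - kern a \<theta> (\<theta>s l) \<le> 0) \<longrightarrow>
           (\<forall>\<theta>. (\<Sum>l'\<in>T. c l' * kern a \<theta> (\<theta>s l')) - kern a \<theta> (\<theta>s l) \<le> 0))"
      using sup unfolding admissible_support_def by blast
    from this[rule_format, of U d l t]
    have "(\<Sum>l'\<in>U. d l' * kern a t (\<theta>s l')) - kern a t (\<theta>s l) \<le> 0"
      using False posU sl lU hyp by blast
    then show ?thesis using cU by (simp add: kern_def inner_comb2 inner_diff_right)
  qed
qed

lemma main_ind:
  "\<forall>t. t \<notin> \<theta>s ` T \<longrightarrow> (\<forall>c. ps a \<theta>s T (a t) c \<longrightarrow> (\<forall>l. 0 \<le> c l) \<and> sum c T < 1)"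
proof (induction "card T" arbitrary: T rule: less_induct)
  case less
  define D where "D = (\<lambda>l. SOME d. ps a \<theta>s (T - {l}) (a (\<theta>s l)) d)"
  define r where "r = (\<lambda>l. a (\<theta>s l) - comb a \<theta>s (T - {l}) (D l))"
  have Dps: "ps a \<theta>s (T - {l}) (a (\<theta>s l)) (D l)" for l
    unfolding D_def by (rule someI_ex[OF exist_ps]) simp
  have DIH: "(\<forall>i. 0 \<le> D l i) \<and> sum (D l) (T - {l}) < 1" if "l \<in> T" for l
  proof -
    have "card (T - {l}) < card T" using that card_gt_0_iff[of T] by auto
    moreover have "\<theta>s l \<notin> \<theta>s ` (T - {l})" using injs by (auto dest: injD)
    ultimately show ?thesis using less Dps by blast
  qed
  have rperp: "inner (r l) (a (\<theta>s j)) = 0" if "j \<in> T - {l}" for l j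
    using R1[OF Dps that] by (simp add: r_def)
  have rcomb: "inner (comb a \<theta>s (T - {l}) q) (r l) = 0" for l q
    by (rule comb_perp) (simp add: rperp)
  have rl: "inner (r l) (a (\<theta>s l)) = inner (r l) (r l)" for l
  proof -
    have "a (\<theta>s l) = r l + comb a \<theta>s (T - {l}) (D l)" by (simp add: r_def)
    then show ?thesis using rcomb[of l "D l"] by (metis inner_add_right inner_commute add_0_right)
  qed
  have rnz: "inner (r l) (r l) > 0" for l
    using r_nonzero[of l "T - {l}" "D l"] by (simp add: r_def)
  have R4: "inner (comb a \<theta>s T q) (r l) = q l * inner (r l) (r l)" if "l \<in> T" for l q
  proof -
    have "inner (comb a \<theta>s T q) (r l) = q l * inner (a (\<theta>s l)) (r l) + inner (comb a \<theta>s (T - {l}) q) (r l)"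
      using comb_remove[OF that, of q] by (simp add: inner_add_left)
    also have "\<dots> = q l * inner (r l) (r l)" using rcomb[of l q] rl[of l] by (simp add: inner_commute)
    finally show ?thesis .
  qed
  have R6: "inner (x - comb a \<theta>s T c) (r l) = 0" if "ps a \<theta>s T x c" "l \<in> T" for x c l
  proof -
    have "inner (x - comb a \<theta>s T c) (comb a \<theta>s (T - {l}) (D l)) = 0"
      using R1[OF that(1)] by (subst inner_commute, intro comb_perp) auto
    moreover have "inner (x - comb a \<theta>s T c) (a (\<theta>s l)) = 0" using R1[OF that] .
    ultimately show ?thesis by (simp add: r_def inner_diff_right)
  qed
  show ?case
  proof (intro allI impI)
    fix t c assume t: "t \<notin> \<theta>s ` T" and c: "ps a \<theta>s T (a t) c"
    have cnn: "0 \<le> c l" for l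
    proof (cases "l \<in> T")
      case False then show ?thesis using c by (simp add: ps_def)
    next
      case True
      have "c l * inner (r l) (r l) = inner (comb a \<theta>s T c) (r l)" using R4[OF True] by simp
      also have "\<dots> = inner (a t) (r l)" using R6[OF c True] by (simp add: inner_diff_left)
      also have "\<dots> \<ge> 0" unfolding r_def using DIH[OF True] Dps[of l]
        by (intro R5) auto
      finally show ?thesis using rnz[of l] by (simp add: zero_le_mult_iff)
    qed
    have "sum c T < 1"
    proof (cases "T = {}")
      case True then show ?thesis by simp
    next
      case False
      define y where "y = (\<Sum>l\<in>T. (1 / inner (r l) (r l)) *\<^sub>R r l)"
      have y1: "inner y (a (\<theta>s i)) = 1" if "i \<in> T" for i
      proof -
        have "inner y (a (\<theta>s i)) = (\<Sum>l\<in>T. (1 / inner (r l) (r l)) * inner (r l) (a (\<theta>s i)))"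
          by (simp add: y_def inner_sum_left)
        also have "\<dots> = (1 / inner (r i) (r i)) * inner (r i) (a (\<theta>s i))
           + (\<Sum>l\<in>T - {i}. (1 / inner (r l) (r l)) * inner (r l) (a (\<theta>s i)))"
          using that by (intro sum.remove) auto
        also have "(\<Sum>l\<in>T - {i}. (1 / inner (r l) (r l)) * inner (r l) (a (\<theta>s i))) = 0"
          using that by (intro sum.neutral) (auto simp: rperp)
        also have "(1 / inner (r i) (r i)) * inner (r i) (a (\<theta>s i)) = 1"
          using rl[of i] rnz[of i] by simp
        finally show ?thesis by simp
      qed
      obtain q where q: "ps a \<theta>s T y q" using exist_ps[of T a \<theta>s y] by auto
      have q1: "inner (comb a \<theta>s T q) (a (\<theta>s i)) = 1" if "i \<in> T" for i
        using R1[OF q that] y1[OF that] by (simp add: inner_diff_left)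
      have qpos: "\<forall>l\<in>T. q l > 0"
      proof
        fix l assume lT: "l \<in> T"
        have "q l * inner (r l) (r l) = inner (comb a \<theta>s T q) (r l)" using R4[OF lT] by simp
        also have "\<dots> = 1 - (\<Sum>i\<in>T - {l}. D l i * inner (comb a \<theta>s T q) (a (\<theta>s i)))"
          using q1[OF lT] by (simp add: r_def inner_diff_right inner_comb2)
        also have "\<dots> = 1 - sum (D l) (T - {l})"
          using q1 by (intro arg_cong[where f="\<lambda>x. 1 - x"] sum.cong refl) auto
        also have "\<dots> > 0" using DIH[OF lT] by simp
        finally show "q l > 0" using rnz[of l] by (simp add: zero_less_mult_iff)
      qed
      have psi1: "psi T q (\<theta>s j) = 1" if "j \<in> T" for j
        using q1[OF that] by (simp add: psi_inner inner_commute)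
      have "sum c T = (\<Sum>l\<in>T. c l * inner (comb a \<theta>s T q) (a (\<theta>s l)))"
        using q1 by (intro sum.cong refl) auto
      also have "\<dots> = inner (comb a \<theta>s T q) (comb a \<theta>s T c)" by (simp add: inner_comb2)
      also have "\<dots> = inner (comb a \<theta>s T q) (a t)"
      proof -
        have "inner (comb a \<theta>s T q) (a t - comb a \<theta>s T c) = 0"
          by (rule comb_perp) (rule R1[OF c])
        then show ?thesis by (simp add: inner_diff_right)
      qed
      also have "\<dots> = psi T q t" by (simp add: psi_inner inner_commute)
      finally have sc: "sum c T = psi T q t" .
      obtain t0 where t0: "\<forall>t'. psi T q t' \<le> psi T q t0" using psi_max[OF False qpos] by blast
      have "t0 \<in> \<theta>s ` T" using psi_maximizer[OF False qpos t0] .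
      then have "psi T q t0 = 1" using psi1 by auto
      moreover have "psi T q t \<le> psi T q t0" using t0 by blast
      ultimately have le: "psi T q t \<le> 1" by simp
      have "psi T q t \<noteq> 1"
      proof
        assume "psi T q t = 1"
        then have "\<forall>t'. psi T q t' \<le> psi T q t" using t0 \<open>psi T q t0 = 1\<close> by simp
        then have "t \<in> \<theta>s ` T" using psi_maximizer[OF False qpos] by blast
        then show False using t by simp
      qed
      then show ?thesis using sc le by simp
    qed
    then show "(\<forall>l. 0 \<le> c l) \<and> sum c T < 1" using cnn by blast
  qed
qed

lemma gram_mult: "(gram a \<theta>s *v x) $ j = inner (a (\<theta>s j)) (comb a \<theta>s UNIV (\<lambda>l. x $ l))"
  by (simp add: gram_def matrix_vector_mult_def kern_def inner_comb2 mult.commute)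

lemma gram_inv: "gram a \<theta>s ** matrix_inv (gram a \<theta>s) = mat 1"
proof -
  have "\<forall>x. gram a \<theta>s *v x = 0 \<longrightarrow> x = 0"
  proof (intro allI impI)
    fix x :: "real^'m" assume x: "gram a \<theta>s *v x = 0"
    define v where "v = comb a \<theta>s UNIV (\<lambda>l. x $ l)"
    have "inner v v = (\<Sum>l\<in>UNIV. x $ l * inner (a (\<theta>s l)) v)"
      by (simp add: v_def inner_comb)
    also have "\<dots> = 0" using x gram_mult[of x] by (simp add: v_def vec_eq_iff)
    finally have "v = 0" by simp
    then show "x = 0" using lin_indep[of "\<lambda>l. x $ l"] by (simp add: v_def comb_def vec_eq_iff)
  qed
  then have "invertible (gram a \<theta>s)"
    using matrix_left_invertible_ker invertible_left_inverse by blast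
  then show ?thesis unfolding invertible_def matrix_inv_def by (rule someI_ex[THEN conjunct1])
qed

lemma final:
  assumes "\<theta> \<notin> range \<theta>s"
  shows "(\<Sum>l\<in>UNIV. \<bar>(matrix_inv (gram a \<theta>s) *v gvec a \<theta>s \<theta>) $ l\<bar>) < 1"
proof -
  define w where "w = matrix_inv (gram a \<theta>s) *v gvec a \<theta>s \<theta>"
  have Gw: "gram a \<theta>s *v w = gvec a \<theta>s \<theta>"
    by (simp add: w_def matrix_vector_mul_assoc gram_inv)
  have "ps a \<theta>s UNIV (a \<theta>) (\<lambda>l. w $ l)"
    unfolding ps_def
  proof (intro conjI ballI allI impI)
    fix j :: 'm
    have "inner (a (\<theta>s j)) (comb a \<theta>s UNIV (\<lambda>l. w $ l)) = kern a \<theta> (\<theta>s j)"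
      using arg_cong[OF Gw, of "\<lambda>v. v $ j"] gram_mult[of w j] by (simp add: gvec_def)
    then show "inner (a \<theta> - comb a \<theta>s UNIV (\<lambda>l. w $ l)) (a (\<theta>s j)) = 0"
      unfolding inner_diff_left kern_def by (simp only: inner_commute[of "a (\<theta>s j)"])
  qed simp
  then have "(\<forall>l. 0 \<le> w $ l) \<and> sum (\<lambda>l. w $ l) UNIV < 1"
    using main_ind[of UNIV] assms by blast
  then show ?thesis by (simp add: w_def[symmetric])
qed

end

theorem mainTheorem3:
  fixes a :: "real^'D \<Rightarrow> 'h::{real_inner,complete_space}"
    and \<theta>s :: "'m::finite \<Rightarrow> real^'D"
  assumes "admissible_kernel a"
    and "inj \<theta>s"
    and "admissible_support a \<theta>s"
  shows "(\<forall>c. (\<Sum>l\<in>UNIV. c l *\<^sub>R a (\<theta>s l)) = 0 \<longrightarrow> (\<forall>l. c l = 0)) \<and>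
         (\<forall>\<theta>. \<theta> \<notin> range \<theta>s \<longrightarrow>
            (\<Sum>l\<in>UNIV. \<bar>(matrix_inv (gram a \<theta>s) *v gvec a \<theta>s \<theta>) $ l\<bar>) < 1)"
proof -
  interpret ctx a \<theta>s using assms by unfold_locales
  show ?thesis using lin_indep final by blast
qed

end
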